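(* Let $d\geq 1$, let $p_1<\dots<p_d$ be the first $d$ prime numbers, let $N\geq 1$ be an integer, let $C>1$ and $\varepsilon\in\mathbb{R}$. Let $\mathbf{S}_1$ be the $(d+1)\times d$ matrix whose $i$-th column has entry $\ln p_i$ in row $i$, entry $C\ln p_i$ in row $d+1$ and zeros elsewhere, and let $\mathbf{t}=(0,\dots,0,C\ln N)^T$. Let $\mathbf{z}\in\mathbb{Z}^d$, put $$u=\prod_{1\le i\le d,\ z_i>0}p_i^{z_i},\qquad k=\prod_{1\le i\le d,\ z_i<0}p_i^{-z_i},$$ and suppose $\|\mathbf{S}_1\mathbf{z}-\mathbf{t}\|_1\leq\varepsilon$. Then $$|u-kN|\leq\frac{\sqrt{N}}{C}\exp\left(\frac{\varepsilon}{2}\right).$$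
   Context: $\ln$ is the natural logarithm, $\|\cdot\|_1$ the $\ell^1$ norm; empty products equal $1$. *)

theory Defs
  imports "HOL-Analysis.Analysis" "HOL-Computational_Algebra.Primes" "HOL-Library.Infinite_Set"
begin

text \<open>The i-th prime, 1-indexed: pr 1 = 2, pr 2 = 3, ...\<close>
definition pr :: "nat \<Rightarrow> nat" where
  "pr i = enumerate {q::nat. prime q} (i - 1)"

text \<open>The (d+1) x d matrix S_1 (rows 1..d+1, columns 1..d).\<close>
definition S1 :: "nat \<Rightarrow> real \<Rightarrow> nat \<Rightarrow> nat \<Rightarrow> real" where
  "S1 d C r c = (if r = c then ln (real (pr c))
                 else if r = d + 1 then C * ln (real (pr c)) else 0)"

definition tvec :: "nat \<Rightarrow> real \<Rightarrow> nat \<Rightarrow> nat \<Rightarrow> real" where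
  "tvec d C N r = (if r = d + 1 then C * ln (real N) else 0)"

definition resid_l1 :: "nat \<Rightarrow> real \<Rightarrow> nat \<Rightarrow> (nat \<Rightarrow> int) \<Rightarrow> real" where
  "resid_l1 d C N z =
     (\<Sum>r=1..d+1. \<bar>(\<Sum>c=1..d. S1 d C r c * real_of_int (z c)) - tvec d C N r\<bar>)"

end

theory Submission
  imports Defs
begin

lemma keyK:
  fixes b x :: real
  assumes b: "b > 1" and x: "x \<ge> 0"
  shows "(2*b-1) * (exp x - 1) \<le> exp (b*x)"
proof -
  define x0 where "x0 = 1/b"
  define E where "E = exp ((b-1)*x0)"
  have Epos: "E > 0" unfolding E_def by simp
  have e1: "exp (b*x) = exp x * E * exp ((b-1)*(x-x0))"
  proof -
    have "x + (b-1)*x0 + (b-1)*(x-x0) = b*x" by (simp add: algebra_simps)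
    hence "exp (b*x) = exp (x + (b-1)*x0 + (b-1)*(x-x0))" by simp
    thus ?thesis unfolding E_def by (simp only: exp_add)
  qed
  have e2: "exp ((b-1)*(x-x0)) \<ge> 1 + (b-1)*(x-x0)" by simp
  have e3: "x - x0 \<ge> 1 - exp (x0 - x)" using exp_ge_add_one_self[of "x0 - x"] by linarith
  have e3': "(b-1)*(x-x0) \<ge> (b-1)*(1 - exp (x0 - x))" using e3 b by (intro mult_left_mono) auto
  have e4: "exp x * exp (x0 - x) = exp x0" by (simp add: exp_add[symmetric])
  have "exp x * (1 + (b-1)*(x-x0)) \<ge> exp x * (1 + (b-1)*(1 - exp (x0 - x)))"
    using e3' by (intro mult_left_mono) auto
  also have "exp x * (1 + (b-1)*(1 - exp (x0 - x))) = b * exp x - (b-1) * exp x0"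
    using e4 by (simp add: algebra_simps)
  finally have e5: "exp x * (1 + (b-1)*(x-x0)) \<ge> b * exp x - (b-1) * exp x0" .
  have "exp (b*x) \<ge> E * (exp x * (1 + (b-1)*(x-x0)))"
    unfolding e1 using e2 Epos by (simp add: mult_left_mono mult.assoc mult.left_commute)
  hence e6: "exp (b*x) \<ge> E * (b * exp x - (b-1) * exp x0)"
    using e5 Epos by (meson mult_left_mono less_imp_le order_trans)
  have x0lt: "x0 < 1" "x0 > 0" unfolding x0_def using b by auto
  have "exp (-x0) \<ge> 1 - x0" using exp_ge_add_one_self[of "-x0"] by simp
  hence "exp x0 * (1 - x0) \<le> 1"
    using x0lt by (smt (verit, best) exp_minus_inverse mult_left_mono exp_gt_zero)
  hence c1: "(b-1) * exp x0 \<le> b"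
    unfolding x0_def using b by (simp add: field_simps)
  have "E \<ge> 1 + (b-1)*x0" unfolding E_def by simp
  hence c2a: "E * b \<ge> (1 + (b-1)*x0) * b" using b by (intro mult_right_mono) auto
  have "(1 + (b-1)*x0) * b = 2*b-1" unfolding x0_def using b by (simp add: field_simps)
  hence c2: "E * b \<ge> 2*b-1" using c2a by simp
  have ex1: "exp x \<ge> 1" using x by simp
  have "(E*b - (2*b-1)) * (exp x - 1) \<ge> 0" using c2 ex1 by simp
  moreover have "E * (b - (b-1) * exp x0) \<ge> 0" using c1 Epos by simp
  ultimately have "(2*b-1) * (exp x - 1) \<le> E * (b * exp x - (b-1) * exp x0)"
    by (simp add: algebra_simps)
  thus ?thesis using e6 by linarith
qed

lemma keyL:
  fixes P x C :: real
  assumes P: "P > 0" and x: "x \<ge> 0" and C: "C > 1"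
  shows "P * exp x - P \<le> sqrt (P * (P * exp x)) * exp (C*x/2) / C"
proof -
  have s: "sqrt (P * (P * exp x)) = P * exp (x/2)"
  proof -
    have "P * (P * exp x) = (P * exp (x/2))^2"
    proof -
      have "exp x = exp (x/2) * exp (x/2)" by (simp add: exp_add[symmetric])
      thus ?thesis by (simp add: power2_eq_square)
    qed
    thus ?thesis using P by simp
  qed
  have "exp (x/2) * exp (C*x/2) = exp (((C+1)/2) * x)"
  proof -
    have "x/2 + C*x/2 = ((C+1)/2) * x" by (simp add: field_simps)
    thus ?thesis by (simp add: exp_add[symmetric])
  qed
  moreover have "(2*((C+1)/2)-1) * (exp x - 1) \<le> exp (((C+1)/2) * x)"
    using keyK[of "(C+1)/2" x] C x by simp
  moreover have "2*((C+1)/2)-1 = C" by (simp add: field_simps)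
  ultimately have "C * (exp x - 1) \<le> exp (x/2) * exp (C*x/2)" by metis
  hence "exp x - 1 \<le> exp (x/2) * exp (C*x/2) / C" using C by (simp add: field_simps)
  hence "P * (exp x - 1) \<le> P * (exp (x/2) * exp (C*x/2) / C)" using P by (intro mult_left_mono) auto
  thus ?thesis unfolding s by (simp add: algebra_simps)
qed

lemma keyM:
  fixes u M C eps :: real
  assumes u: "u > 0" and M: "M > 0" and C: "C > 1"
  shows "\<bar>u - M\<bar> \<le> sqrt (u * M) * exp (C * \<bar>ln u - ln M\<bar> / 2) / C"
proof (cases "u \<ge> M")
  case True
  define x where "x = ln u - ln M"
  have x0: "x \<ge> 0" unfolding x_def using True M u by simp
  have ux: "u = M * exp x" unfolding x_def using u M by (simp add: exp_diff)
  show ?thesis using keyL[OF M x0 C] True x0 unfolding x_def[symmetric]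
    by (simp add: ux mult.commute)
next
  case False
  define x where "x = ln M - ln u"
  have x0: "x \<ge> 0" unfolding x_def using False M u by simp
  have ux: "M = u * exp x" unfolding x_def using u M by (simp add: exp_diff)
  have ab: "\<bar>ln u - ln M\<bar> = x" unfolding x_def using x0 x_def by simp
  show ?thesis using keyL[OF u x0 C] False unfolding ab
    by (simp add: ux)
qed


lemma pr_prime: "prime (pr i)"
  unfolding pr_def using enumerate_in_set[OF primes_infinite] by simp

lemma pr_ln_pos: "ln (real (pr i)) > 0"
  using prime_gt_1_nat[OF pr_prime[of i]] by simp

theorem lemma2:
  fixes d N :: nat and C \<epsilon> :: real and z :: "nat \<Rightarrow> int"
  assumes "d \<ge> 1" and "N \<ge> 1" and "C > 1"
    and "resid_l1 d C N z \<le> \<epsilon>"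
  shows "\<bar>real (\<Prod>i\<in>{i\<in>{1..d}. z i > 0}. pr i ^ nat (z i))
          - real (\<Prod>i\<in>{i\<in>{1..d}. z i < 0}. pr i ^ nat (- z i)) * real N\<bar>
         \<le> sqrt (real N) / C * exp (\<epsilon> / 2)"
proof -
  define l where "l c = ln (real (pr c))" for c
  define U where "U = real (\<Prod>i\<in>{i\<in>{1..d}. z i > 0}. pr i ^ nat (z i))"
  define K where "K = real (\<Prod>i\<in>{i\<in>{1..d}. z i < 0}. pr i ^ nat (- z i))"
  have prpos: "real (pr i) > 0" for i using prime_gt_1_nat[OF pr_prime[of i]] by simp
  have Upos: "U > 0" unfolding U_def using prpos by (simp add: prod_pos)
  have Kpos: "K > 0" unfolding K_def using prpos by (simp add: prod_pos)
  have lnU: "ln U = (\<Sum>c=1..d. if z c > 0 then of_int (z c) * l c else 0)"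
  proof -
    have "U = (\<Prod>i\<in>{i\<in>{1..d}. z i > 0}. real (pr i) ^ nat (z i))" unfolding U_def by simp
    hence "ln U = (\<Sum>i\<in>{i\<in>{1..d}. z i > 0}. ln (real (pr i) ^ nat (z i)))"
      using prpos by (simp add: ln_prod)
    also have "\<dots> = (\<Sum>i\<in>{i\<in>{1..d}. z i > 0}. of_int (z i) * l i)"
      by (intro sum.cong) (auto simp: ln_realpow l_def)
    finally show ?thesis by (simp only: sum.inter_filter[OF finite_atLeastAtMost])
  qed
  have lnK: "ln K = (\<Sum>c=1..d. if z c < 0 then - of_int (z c) * l c else 0)"
  proof -
    have "K = (\<Prod>i\<in>{i\<in>{1..d}. z i < 0}. real (pr i) ^ nat (- z i))" unfolding K_def by simp
    hence "ln K = (\<Sum>i\<in>{i\<in>{1..d}. z i < 0}. ln (real (pr i) ^ nat (- z i)))"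
      using prpos by (simp add: ln_prod)
    also have "\<dots> = (\<Sum>i\<in>{i\<in>{1..d}. z i < 0}. - of_int (z i) * l i)"
      by (intro sum.cong) (auto simp: ln_realpow l_def)
    finally show ?thesis by (simp only: sum.inter_filter[OF finite_atLeastAtMost])
  qed
  have sabs: "(\<Sum>c=1..d. \<bar>of_int (z c)\<bar> * l c) = ln U + ln K"
    unfolding lnU lnK sum.distrib[symmetric] by (intro sum.cong) auto
  have slin: "(\<Sum>c=1..d. of_int (z c) * l c) = ln U - ln K"
    unfolding lnU lnK sum_subtractf[symmetric] by (intro sum.cong) auto
  have rows: "(\<Sum>c=1..d. S1 d C r c * real_of_int (z c)) - tvec d C N r = l r * of_int (z r)"
    if "r \<in> {1..d}" for r
  proof -
    have "(\<Sum>c=1..d. S1 d C r c * real_of_int (z c)) = (\<Sum>c=1..d. if c = r then l c * of_int (z c) else 0)"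
      using that by (intro sum.cong) (auto simp: S1_def l_def)
    also have "\<dots> = l r * of_int (z r)" using that by (simp add: sum.delta')
    finally show ?thesis using that by (simp add: tvec_def)
  qed
  have lastrow: "(\<Sum>c=1..d. S1 d C (d+1) c * real_of_int (z c)) - tvec d C N (d+1)
      = C * (ln U - ln K) - C * ln (real N)"
  proof -
    have "(\<Sum>c=1..d. S1 d C (d+1) c * real_of_int (z c)) = (\<Sum>c=1..d. C * (of_int (z c) * l c))"
      by (intro sum.cong) (auto simp: S1_def l_def)
    also have "\<dots> = C * (ln U - ln K)" by (simp only: sum_distrib_left[symmetric] slin)
    finally show ?thesis by (simp add: tvec_def)
  qed
  have "resid_l1 d C N z = (\<Sum>r=1..d. \<bar>l r * of_int (z r)\<bar>) + \<bar>C * (ln U - ln K) - C * ln (real N)\<bar>"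
    unfolding resid_l1_def using rows lastrow by (simp add: sum.cl_ivl_Suc)
  also have "(\<Sum>r=1..d. \<bar>l r * of_int (z r)\<bar>) = ln U + ln K"
    unfolding sabs[symmetric] using pr_ln_pos by (intro sum.cong) (auto simp: abs_mult l_def less_imp_le)
  finally have res: "ln U + ln K + \<bar>C * (ln U - ln K) - C * ln (real N)\<bar> \<le> \<epsilon>"
    using assms(4) by simp
  define M where "M = K * real N"
  have Npos: "real N > 0" using assms(2) by simp
  have Mpos: "M > 0" unfolding M_def using Kpos Npos by simp
  have lnM: "ln M = ln K + ln (real N)" unfolding M_def using Kpos Npos by (simp add: ln_mult)
  have absC0: "C * (ln U - ln K) - C * ln (real N) = C * (ln U - ln M)"
    unfolding lnM by (simp add: algebra_simps)
  have absC: "\<bar>C * (ln U - ln K) - C * ln (real N)\<bar> = C * \<bar>ln U - ln M\<bar>"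
    unfolding absC0 abs_mult using assms(3) by simp
  have km: "\<bar>U - M\<bar> \<le> sqrt (U * M) * exp (C * \<bar>ln U - ln M\<bar> / 2) / C"
    by (rule keyM[OF Upos Mpos assms(3)])
  have sq: "sqrt (U * M) = sqrt (real N) * exp ((ln U + ln K)/2)"
  proof -
    have e: "exp ((ln U + ln K)/2) ^ 2 = exp (ln U + ln K)"
      by (simp add: power2_eq_square exp_add[symmetric])
    have "exp (ln U + ln K) = U * K" using Upos Kpos by (simp add: exp_add)
    hence "U * K = (exp ((ln U + ln K)/2))^2" using e by simp
    hence s1: "sqrt (U * K) = exp ((ln U + ln K)/2)" by simp
    have "U * M = (U * K) * real N" unfolding M_def by simp
    hence "sqrt (U * M) = sqrt (U * K) * sqrt (real N)" by (simp only: real_sqrt_mult)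
    thus ?thesis unfolding s1 by simp
  qed
  have eq: "sqrt (U * M) * exp (C * \<bar>ln U - ln M\<bar> / 2) = sqrt (real N) * exp ((ln U + ln K + C * \<bar>ln U - ln M\<bar>)/2)"
  proof -
    have "(ln U + ln K)/2 + C * \<bar>ln U - ln M\<bar> / 2 = (ln U + ln K + C * \<bar>ln U - ln M\<bar>)/2"
      by (simp add: add_divide_distrib)
    thus ?thesis unfolding sq by (simp only: mult.assoc exp_add[symmetric])
  qed
  have le: "exp ((ln U + ln K + C * \<bar>ln U - ln M\<bar>)/2) \<le> exp (\<epsilon>/2)"
    using res absC by simp
  have "sqrt (U * M) * exp (C * \<bar>ln U - ln M\<bar> / 2) \<le> sqrt (real N) * exp (\<epsilon>/2)"
    unfolding eq using le by (intro mult_left_mono) auto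
  hence "sqrt (U * M) * exp (C * \<bar>ln U - ln M\<bar> / 2) / C \<le> sqrt (real N) * exp (\<epsilon>/2) / C"
    using assms(3) by (intro divide_right_mono) auto
  hence "\<bar>U - M\<bar> \<le> sqrt (real N) * exp (\<epsilon>/2) / C" using km by linarith
  thus ?thesis unfolding U_def[symmetric] K_def[symmetric] M_def[symmetric] by simp
qed

end
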